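(* Let $A,B\in M_\ell(F)$ commute, let $F_A$ be an idempotent associated with $A$, and let $Q''_L=\mathrm{CSS}(A,(H_Z)_L)$ with $(H_Z)_L=(B(I-F_A))^T$. Suppose $A$ is block-diagonal, i.e., there is a partition of the index set $\{1,\dots,\ell\}$ into consecutive intervals each of size at most $m$ such that $A_{ij}=0$ whenever $i,j$ lie in different intervals. If $Q''_L$ is non-trivial (its dimension $\ell-\mathrm{rank}A-\mathrm{rank}(B(I-F_A))$ is positive), then $d_Z(Q''_L)\le m$.
   Context: $F=\mathbb F_q$ is a finite field. For $H_X,H_Z$ with $n$ columns and $H_XH_Z^T=0$, $\mathrm{CSS}(H_X,H_Z)$ has dimension $n-\mathrm{rank}H_X-\mathrm{rank}H_Z$ and $Z$-distance $d_Z=\min\{\mathrm{wgt}(c):c\in C_{H_X}^\perp\setminus C_{H_Z}\}$, with $C_H$ the row space of $H$ and $C_H^\perp$ its orthogonal complement. An idempotent associated with $A$ on the right is any $F_A$ with $F_A^2=F_A$, $\mathrm{rank}F_A=\mathrm{rank}A$, $AF_A=A$. Note $A(B(I-F_A))=B(A-AF_A)=0$, so $Q''_L$ is a stabilizer CSS code. *)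

theory Defs
  imports "Jordan_Normal_Form.DL_Rank"
begin

definition mrank :: "nat \<Rightarrow> 'a::field mat \<Rightarrow> nat" where
  "mrank n H = vec_space.rank n H"

definition rowsp :: "nat \<Rightarrow> 'a::field mat \<Rightarrow> 'a vec set" where
  "rowsp n H = vec_space.row_space n H"

definition orthc :: "nat \<Rightarrow> 'a::field vec set \<Rightarrow> 'a vec set" where
  "orthc n C = {c \<in> carrier_vec n. \<forall>r\<in>C. r \<bullet> c = 0}"

definition wgt :: "'a::zero vec \<Rightarrow> nat" where
  "wgt c = card {i. i < dim_vec c \<and> c $ i \<noteq> 0}"

definition css_dim :: "nat \<Rightarrow> 'a::field mat \<Rightarrow> 'a mat \<Rightarrow> int" where
  "css_dim n HX HZ = int n - int (mrank n HX) - int (mrank n HZ)"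

definition css_dZ :: "nat \<Rightarrow> 'a::field mat \<Rightarrow> 'a mat \<Rightarrow> nat" where
  "css_dZ n HX HZ = Inf (wgt ` (orthc n (rowsp n HX) - rowsp n HZ))"

definition right_idempotent :: "nat \<Rightarrow> 'a::field mat \<Rightarrow> 'a mat \<Rightarrow> bool" where
  "right_idempotent l A FA \<longleftrightarrow> FA \<in> carrier_mat l l \<and> FA * FA = FA
     \<and> mrank l FA = mrank l A \<and> A * FA = A"

text \<open>A (l x l) is block diagonal w.r.t. a partition of {0..<l} into consecutive
  intervals of size at most m: blk assigns each index its interval, non-decreasing.\<close>
definition block_diag_le :: "nat \<Rightarrow> nat \<Rightarrow> 'a::zero mat \<Rightarrow> bool" where
  "block_diag_le l m A \<longleftrightarrow> (\<exists>blk :: nat \<Rightarrow> nat.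
      (\<forall>i j. i \<le> j \<and> j < l \<longrightarrow> blk i \<le> blk j)
    \<and> (\<forall>k. card {i. i < l \<and> blk i = k} \<le> m)
    \<and> (\<forall>i j. i < l \<and> j < l \<and> blk i \<noteq> blk j \<longrightarrow> A $$ (i, j) = 0))"

end

theory Submission imports Defs "Jordan_Normal_Form.Matrix_Kernel" begin

lemma rank_nullity_mat:
  fixes M :: "'a::field mat"
  assumes M: "M \<in> carrier_mat r n"
  shows "vec_space.rank r M + kernel_dim M = n"
proof -
  interpret V: vec_space "TYPE('a)" n .
  interpret W: vec_space "TYPE('a)" r .
  interpret K: kernel r n M by (unfold_locales, rule M)
  interpret L: linear_map class_ring "module_vec TYPE('a) n" "module_vec TYPE('a) r" "\<lambda>v. M *\<^sub>v v"
    apply (intro linear_map.intro vec_vs mod_hom.intro)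
    subgoal using vec_vs vectorspace.axioms by blast
    subgoal using vec_vs vectorspace.axioms by blast
    subgoal unfolding mod_hom_axioms_def LinearCombinations.module_hom_def using M by (auto simp: mult_add_distrib_mat_vec mult_mat_vec module_vec_simps)
    done
  have "vectorspace.dim class_ring ((module_vec TYPE('a) r)\<lparr>carrier := L.imT\<rparr>) + vectorspace.dim class_ring ((module_vec TYPE('a) n)\<lparr>carrier := L.kerT\<rparr>) = n"
    using L.rank_nullity V.fin_dim V.dim_is_n by simp
  moreover have "L.imT = W.span (set (cols M))"
    using W.col_space_eq[OF M] M unfolding W.col_space_def L.im_def by auto
  moreover have "L.kerT = mat_kernel M"
    using M unfolding L.ker_def mat_kernel_def by auto
  ultimately show ?thesis using M K.kernel_dim unfolding W.rank_def by simp
qed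

lemma ker_le_dim:
  fixes A :: "'a::field mat"
  assumes A: "A \<in> carrier_mat r n"
    and Ysub: "submodule class_ring Y (module_vec TYPE('a) n)"
    and fd: "vectorspace.fin_dim class_ring ((module_vec TYPE('a) n)\<lparr>carrier := Y\<rparr>)"
    and sub: "mat_kernel A \<subseteq> Y"
  shows "kernel_dim A \<le> vectorspace.dim class_ring ((module_vec TYPE('a) n)\<lparr>carrier := Y\<rparr>)"
proof -
  interpret V: vec_space "TYPE('a)" n .
  interpret K: kernel r n A by (unfold_locales, rule A)
  obtain Bs where fin: "finite Bs" and bas: "K.basis Bs" using kernel_basis_exists[OF A] by auto
  have kd: "kernel_dim A = card Bs" using K.kernel_dim K.Ker.dim_basis[OF fin bas] by simp
  have BsK: "Bs \<subseteq> mat_kernel A" using bas unfolding K.Ker.basis_def by auto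
  have li: "V.lin_indpt Bs" using bas K.lindep_same[OF BsK] unfolding K.Ker.basis_def by auto
  have vsY: "vectorspace class_ring (V.vs Y)"
    using V.subspace_is_vs[of Y] Ysub V.vectorspace_axioms unfolding subspace_def by simp
  have BsY: "Bs \<subseteq> Y" using BsK sub by auto
  have li': "\<not> module.lin_dep class_ring (V.vs Y) Bs"
    using V.span_li_not_depend(2)[OF BsY Ysub] li by simp
  have "card Bs \<le> vectorspace.dim class_ring (V.vs Y)"
    using vectorspace.li_le_dim(2)[OF vsY fd _ li'] BsY by simp
  thus ?thesis using kd by simp
qed

lemma ker_le_rank:
  fixes A M :: "'a::field mat"
  assumes A: "A \<in> carrier_mat r n" and M: "M \<in> carrier_mat n k"
    and sub: "mat_kernel A \<subseteq> LinearCombinations.module.span class_ring (module_vec TYPE('a) n) (set (cols M))"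
  shows "kernel_dim A \<le> vec_space.rank n M"
proof -
  interpret V: vec_space "TYPE('a)" n .
  have cM: "set (cols M) \<subseteq> carrier_vec n" using M cols_dim by blast
  have Ysub: "submodule class_ring (V.span (set (cols M))) V.V" using V.span_is_submodule cM by simp
  show ?thesis using ker_le_dim[OF A Ysub V.fin_dim_span_cols[OF M] sub] unfolding V.rank_def by simp
qed

lemma ker_mono:
  fixes A M :: "'a::field mat"
  assumes A: "A \<in> carrier_mat r n" and M: "M \<in> carrier_mat k n"
    and sub: "mat_kernel A \<subseteq> mat_kernel M"
  shows "kernel_dim A \<le> kernel_dim M"
proof -
  interpret V: vec_space "TYPE('a)" n .
  interpret W: vec_space "TYPE('a)" k .
  interpret K: kernel k n M by (unfold_locales, rule M)
  interpret L: linear_map class_ring "module_vec TYPE('a) n" "module_vec TYPE('a) k" "\<lambda>v. M *\<^sub>v v"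
    apply (intro linear_map.intro vec_vs mod_hom.intro)
    subgoal using vec_vs vectorspace.axioms by blast
    subgoal using vec_vs vectorspace.axioms by blast
    subgoal unfolding mod_hom_axioms_def LinearCombinations.module_hom_def using M by (auto simp: mult_add_distrib_mat_vec mult_mat_vec module_vec_simps)
    done
  have "L.kerT = mat_kernel M"
    using M unfolding L.ker_def mat_kernel_def by auto
  hence Ysub: "submodule class_ring (mat_kernel M) V.V" using L.kerT_is_subspace unfolding subspace_def by simp
  obtain Bs where fin: "finite Bs" and bas: "K.basis Bs" using kernel_basis_exists[OF M] by auto
  have fd: "vectorspace.fin_dim class_ring (V.vs (mat_kernel M))"
    using fin bas unfolding K.Ker.fin_dim_def K.Ker.basis_def by auto
  show ?thesis using ker_le_dim[OF A Ysub fd sub] K.kernel_dim by simp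
qed

lemma rank_le_transpose:
  fixes M :: "'a::field mat"
  assumes M: "M \<in> carrier_mat r n"
  shows "vec_space.rank r M \<le> vec_space.rank n (transpose_mat M)"
proof -
  interpret V: vec_space "TYPE('a)" n .
  have MT: "transpose_mat M \<in> carrier_mat n r" using M by simp
  obtain S where maxS: "maximal S (\<lambda>T. T \<subseteq> set (cols (transpose_mat M)) \<and> V.lin_indpt T)"
    using maximal_exists[of "(\<lambda>T. T \<subseteq> set (cols (transpose_mat M)) \<and> V.lin_indpt T)" "card (set (cols (transpose_mat M)))" "{}"]
    by (meson List.finite_set card_mono empty_iff empty_subsetI V.finite_lin_indpt2 rev_finite_subset)
  have rT: "V.rank (transpose_mat M) = card S" using V.rank_card_indpt[OF MT maxS] .
  have R: "set (rows M) \<subseteq> carrier_vec n" using M rows_carrier[of M] unfolding carrier_mat_def by auto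
  have SR: "S \<subseteq> set (rows M)" and liS: "V.lin_indpt S" using maxS unfolding maximal_def cols_transpose by auto
  have finS: "finite S" using SR finite_subset by blast
  have Sc: "S \<subseteq> carrier_vec n" using SR R by auto
  have RS: "set (rows M) \<subseteq> V.span S"
  proof
    fix s assume s: "s \<in> set (rows M)"
    show "s \<in> V.span S"
    proof (cases "s \<in> S")
      case True thus ?thesis using V.in_own_span[OF Sc] by auto
    next
      case False
      show ?thesis
      proof (rule ccontr)
        assume "s \<notin> V.span S"
        hence "V.lin_indpt (S \<union> {s})" using V.lin_dep_iff_in_span[OF Sc liS _ False] s R by auto
        hence "S \<union> {s} = S" using maxS s SR unfolding maximal_def cols_transpose by auto
        thus False using False by auto
      qed
    qed
  qed
  obtain xs where xs: "set xs = S" "distinct xs" using finite_distinct_list[OF finS] by auto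
  define k where "k = length xs"
  have kS: "k = card S" unfolding k_def using xs distinct_card by metis
  define N where "N = mat_of_rows n xs"
  have N: "N \<in> carrier_mat k n" unfolding N_def k_def by simp
  have kerNM: "mat_kernel N \<subseteq> mat_kernel M"
  proof
    fix v assume v: "v \<in> mat_kernel N"
    hence vc: "v \<in> carrier_vec n" and Nv: "N *\<^sub>v v = 0\<^sub>v k" using mat_kernelD[OF N] by auto
    have "\<forall>s\<in>S. v \<bullet> s = 0"
    proof
      fix s assume "s \<in> S"
      then obtain i where i: "i < k" "xs ! i = s" using xs unfolding k_def by (metis in_set_conv_nth)
      have sc: "s \<in> carrier_vec n" using Sc \<open>s \<in> S\<close> by auto
      have "row N i = s" unfolding N_def using i xs Sc unfolding k_def by (subst mat_of_rows_row) auto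
      hence "s \<bullet> v = 0" using Nv i N by (metis index_mult_mat_vec index_zero_vec(1) carrier_matD(1))
      thus "v \<bullet> s = 0" using comm_scalar_prod[OF sc vc] by simp
    qed
    hence "v \<in> V.orthogonal_complement S" unfolding V.orthogonal_complement_def using vc by auto
    hence vo: "v \<in> V.orthogonal_complement (V.span S)" using V.in_orthogonal_complement_span[OF Sc] by simp
    have "M *\<^sub>v v = 0\<^sub>v r"
    proof (rule eq_vecI)
      fix i assume "i < dim_vec (0\<^sub>v r :: 'a vec)"
      hence i: "i < r" by simp
      have rc: "row M i \<in> carrier_vec n" using M i by auto
      have "row M i \<in> set (rows M)" using M i by (auto simp: rows_def)
      hence "v \<bullet> row M i = 0" using vo RS unfolding V.orthogonal_complement_def by auto
      thus "(M *\<^sub>v v) $ i = 0\<^sub>v r $ i" using i M comm_scalar_prod[OF rc vc] by simp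
    qed (use M in simp)
    thus "v \<in> mat_kernel M" using vc M by (intro mat_kernelI) auto
  qed
  have kd: "kernel_dim N \<le> kernel_dim M" using ker_mono[OF N M kerNM] .
  have rn1: "vec_space.rank r M + kernel_dim M = n" using rank_nullity_mat[OF M] .
  have rn2: "vec_space.rank k N + kernel_dim N = n" using rank_nullity_mat[OF N] .
  interpret W: vec_space "TYPE('a)" k .
  have cN: "set (cols N) \<subseteq> carrier_vec k" using N cols_dim by blast
  have "W.rank N \<le> W.dim"
    unfolding W.rank_def using W.subspace_dim[OF W.span_is_subspace[OF cN] W.fin_dim W.fin_dim_span_cols[OF N]] .
  hence "W.rank N \<le> k" using W.dim_is_n by simp
  thus ?thesis using rn1 rn2 kd rT kS by linarith
qed

theorem mainTheorem5:
  fixes A B FA :: "'a::{field,finite} mat" and l m :: nat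
  assumes "A \<in> carrier_mat l l" and "B \<in> carrier_mat l l"
    and "A * B = B * A"
    and "right_idempotent l A FA"
    and "block_diag_le l m A"
    and "css_dim l A (transpose_mat (B * (1\<^sub>m l - FA))) > 0"
  shows "css_dZ l A (transpose_mat (B * (1\<^sub>m l - FA))) \<le> m"
proof (rule ccontr)
  assume contra: "\<not> ?thesis"
  have A: "A \<in> carrier_mat l l" by fact
  define M where "M = B * (1\<^sub>m l - FA)"
  have FA: "FA \<in> carrier_mat l l" using assms(4) unfolding right_idempotent_def by auto
  have M: "M \<in> carrier_mat l l" unfolding M_def using assms(2) FA by auto
  interpret V: vec_space "TYPE('a)" l .
  obtain blk :: "nat \<Rightarrow> nat" where
    bcard: "\<And>k. card {i. i < l \<and> blk i = k} \<le> m" and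
    bz: "\<And>i j. i < l \<Longrightarrow> j < l \<Longrightarrow> blk i \<noteq> blk j \<Longrightarrow> A $$ (i, j) = 0"
    using assms(5) unfolding block_diag_le_def by blast
  define Y where "Y = V.span (set (cols M))"
  have rowsY: "rowsp l (transpose_mat M) = Y"
    unfolding rowsp_def Y_def V.row_space_def by (simp add: cols_transpose[symmetric])
  have cM: "set (cols M) \<subseteq> carrier_vec l" using M cols_dim by blast
  have Ysub: "submodule class_ring Y V.V" unfolding Y_def using V.span_is_submodule cM by simp
  define D where "D = orthc l (rowsp l A) - rowsp l (transpose_mat M)"
  have dZ: "css_dZ l A (transpose_mat M) = Inf (wgt ` D)" unfolding css_dZ_def D_def ..
  have blockY: "vec l (\<lambda>i. if blk i = k then c $ i else 0) \<in> Y" if c: "c \<in> mat_kernel A" for c k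
  proof (rule ccontr)
    define ck where "ck = vec l (\<lambda>i. if blk i = k then c $ i else 0)"
    assume "\<not> ?thesis"
    hence nY: "ck \<notin> Y" unfolding ck_def .
    have cc: "c \<in> carrier_vec l" and Ac: "A *\<^sub>v c = 0\<^sub>v l" using mat_kernelD[OF A c] by auto
    have ckc: "ck \<in> carrier_vec l" unfolding ck_def by simp
    have Ack: "A *\<^sub>v ck = 0\<^sub>v l"
    proof (rule eq_vecI)
      fix i assume "i < dim_vec (0\<^sub>v l :: 'a vec)"
      hence i: "i < l" by simp
      have "(A *\<^sub>v ck) $ i = (\<Sum>j<l. A $$ (i, j) * ck $ j)"
        using A i ckc by (simp add: scalar_prod_def lessThan_atLeast0)
      also have "\<dots> = (\<Sum>j<l. if blk i = k then A $$ (i, j) * c $ j else 0)"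
        by (rule sum.cong) (auto simp: ck_def bz i)
      also have "\<dots> = (if blk i = k then (A *\<^sub>v c) $ i else 0)"
        using A i cc by (simp add: scalar_prod_def lessThan_atLeast0)
      also have "\<dots> = 0" using Ac i by simp
      finally show "(A *\<^sub>v ck) $ i = 0\<^sub>v l $ i" using i by simp
    qed (use A in simp)
    have ort: "ck \<in> orthc l (rowsp l A)"
    proof -
      have "r \<bullet> ck = 0" if r: "r \<in> rowsp l A" for r
      proof -
        obtain y where y: "y \<in> carrier_vec l" and ry: "r = transpose_mat A *\<^sub>v y"
          using r V.row_space_eq[OF A] A unfolding rowsp_def by auto
        show ?thesis unfolding ry using transpose_vec_mult_scalar[OF A ckc y] Ack y by simp
      qed
      thus ?thesis unfolding orthc_def using ckc by auto
    qed
    have wk: "wgt ck \<le> m"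
    proof -
      have "{i. i < dim_vec ck \<and> ck $ i \<noteq> 0} \<subseteq> {i. i < l \<and> blk i = k}"
        unfolding ck_def by (auto split: if_splits)
      hence "wgt ck \<le> card {i. i < l \<and> blk i = k}" unfolding wgt_def
        by (intro card_mono) auto
      thus ?thesis using bcard[of k] by simp
    qed
    have "ck \<in> D" unfolding D_def using ort nY rowsY by simp
    hence "Inf (wgt ` D) \<le> wgt ck" by (intro cInf_lower) auto
    thus False using contra wk dZ unfolding M_def by simp
  qed
  have kerY: "mat_kernel A \<subseteq> Y"
  proof
    fix c assume c: "c \<in> mat_kernel A"
    have cc: "c \<in> carrier_vec l" using mat_kernelD[OF A c] by auto
    have step: "vec l (\<lambda>i. if blk i < j then c $ i else 0) \<in> Y" for j
    proof (induction j)
      case 0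
      have "vec l (\<lambda>i. if blk i < 0 then c $ i else 0) = 0\<^sub>v l" by auto
      thus ?case using submodule.zero_closed[OF Ysub] by simp
    next
      case (Suc j)
      have "vec l (\<lambda>i. if blk i < Suc j then c $ i else 0) =
        vec l (\<lambda>i. if blk i < j then c $ i else 0) + vec l (\<lambda>i. if blk i = j then c $ i else 0)"
        by (auto simp: less_Suc_eq)
      thus ?case using submodule.m_closed[OF Ysub Suc blockY[OF c, of j]] by simp
    qed
    define J where "J = Suc (\<Sum>i<l. blk i)"
    have "vec l (\<lambda>i. if blk i < J then c $ i else 0) = c"
    proof (rule eq_vecI)
      fix i assume "i < dim_vec c"
      hence i: "i < l" using cc by simp
      have "blk i \<le> (\<Sum>i<l. blk i)" using i by (intro member_le_sum) auto
      thus "vec l (\<lambda>i. if blk i < J then c $ i else 0) $ i = c $ i" using i unfolding J_def by simp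
    qed (use cc in simp)
    thus "c \<in> Y" using step[of J] by simp
  qed
  have k1: "kernel_dim A \<le> V.rank M" using ker_le_rank[OF A M] kerY unfolding Y_def by simp
  have k2: "V.rank M \<le> V.rank (transpose_mat M)" using rank_le_transpose[OF M] .
  have rn: "V.rank A + kernel_dim A = l" using rank_nullity_mat[OF A] .
  have "css_dim l A (transpose_mat M) > 0" using assms(6) unfolding M_def .
  hence "int l > int (V.rank A) + int (V.rank (transpose_mat M))"
    unfolding css_dim_def mrank_def by simp
  thus False using k1 k2 rn by linarith
qed
end
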